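(* The function $\gamma(p)=\dfrac{p^2}{\log(e-\log p)}$ is increasing and convex on the interval $(0,1)$. *)

theory Defs
  imports "HOL-Analysis.Analysis"
begin

definition gamma_fun :: "real \<Rightarrow> real" where
  "gamma_fun p = p\<^sup>2 / ln (exp 1 - ln p)"

end

theory Submission
  imports Defs
begin

definition gd :: "real \<Rightarrow> real" where
  "gd p = p * (2 / ln (exp 1 - ln p) + 1 / ((exp 1 - ln p) * (ln (exp 1 - ln p))\<^sup>2))"

lemma lnneg: "0 < p \<Longrightarrow> p < 1 \<Longrightarrow> ln (p::real) < 0"
  by simp

lemma u_gt: "0 < (p::real) \<Longrightarrow> p < 1 \<Longrightarrow> exp 1 < exp 1 - ln p"
  using lnneg[of p] by simp

lemma g_gt: "0 < (p::real) \<Longrightarrow> p < 1 \<Longrightarrow> 1 < ln (exp 1 - ln p)"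
proof -
  assume a: "0 < p" "p < 1"
  have "exp 1 < exp 1 - ln p" using a u_gt by blast
  then have "ln (exp 1) < ln (exp 1 - ln p)" by (smt (verit) exp_gt_zero ln_less_cancel_iff)
  then show ?thesis by simp
qed

lemma alg: "0 < (p::real) \<Longrightarrow> 0 < u \<Longrightarrow> 0 < g \<Longrightarrow>
  (2 * p * g - p\<^sup>2 * ((- (1/p)) / u)) / g\<^sup>2 = p * (2 / g + 1 / (u * g\<^sup>2))"
  by (simp add: field_simps power2_eq_square)

lemma posf: "0 < (p::real) \<Longrightarrow> 0 < u \<Longrightarrow> 0 < g \<Longrightarrow> 0 < p * (2 / g + 1 / (u * g\<^sup>2))"
  by (intro mult_pos_pos add_pos_pos divide_pos_pos) auto

lemma deriv_g:
  assumes "0 < p" "p < 1"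
  shows "(gamma_fun has_real_derivative gd p) (at p)"
proof -
  have u: "exp 1 < exp 1 - ln p" using assms u_gt by blast
  have g: "1 < ln (exp 1 - ln p)" using g_gt assms by blast
  have "0 < exp (1::real)" by simp
  have lp: "ln p < exp 1" using lnneg[of p] assms exp_gt_zero[of 1] by linarith
  have "((\<lambda>p. p\<^sup>2 / ln (exp 1 - ln p)) has_real_derivative
     (2 * p * ln (exp 1 - ln p) - p\<^sup>2 * ((- (1/p)) / (exp 1 - ln p))) / (ln (exp 1 - ln p))\<^sup>2) (at p)"
    using assms u g lp
    by (auto intro!: derivative_eq_intros simp: power2_eq_square)
  moreover have "(2 * p * ln (exp 1 - ln p) - p\<^sup>2 * ((- (1/p)) / (exp 1 - ln p))) / (ln (exp 1 - ln p))\<^sup>2 = gd p"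
    unfolding gd_def
    by (rule alg) (use assms u g exp_gt_zero[of 1] in linarith)+
  ultimately show ?thesis unfolding gamma_fun_def[abs_def] by simp
qed

lemma gd_pos: "0 < p \<Longrightarrow> p < 1 \<Longrightarrow> 0 < gd p"
  unfolding gd_def
  by (rule posf) (use g_gt[of p] u_gt[of p] exp_gt_zero[of 1] in linarith)+

lemma gd_mono:
  assumes "0 < x" "x \<le> y" "y < 1"
  shows "gd x \<le> gd y"
proof -
  define ux where "ux = exp 1 - ln x"
  define uy where "uy = exp 1 - ln y"
  have uxy: "uy \<le> ux" using assms unfolding ux_def uy_def by simp
  have uy: "exp 1 < uy" using assms u_gt[of y] unfolding uy_def by simp
  have gy: "1 < ln uy" using g_gt[of y] assms unfolding uy_def by simp
  have gxy: "ln uy \<le> ln ux" using uxy uy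
    by (smt (verit) exp_gt_zero ln_le_cancel_iff)
  have h1: "2 / ln ux \<le> 2 / ln uy" using gxy gy by (intro divide_left_mono) auto
  have "uy * (ln uy)\<^sup>2 \<le> ux * (ln ux)\<^sup>2"
    using uxy gxy gy uy by (intro mult_mono power_mono) (auto, smt (verit) exp_gt_zero)
  moreover have "0 < uy * (ln uy)\<^sup>2" using gy uy exp_gt_zero[of 1] by (intro mult_pos_pos) (linarith, simp)
  ultimately have h2: "1 / (ux * (ln ux)\<^sup>2) \<le> 1 / (uy * (ln uy)\<^sup>2)"
    by (intro divide_left_mono) (auto intro: mult_pos_pos)
  have hp: "0 \<le> 2 / ln ux + 1 / (ux * (ln ux)\<^sup>2)"
    using gxy gy uxy uy by (smt (verit) divide_nonneg_nonneg exp_gt_zero mult_nonneg_nonneg zero_le_power2)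
  show ?thesis unfolding gd_def ux_def[symmetric] uy_def[symmetric]
    using assms h1 h2 hp by (intro mult_mono) auto
qed

theorem lemma26:
  shows "strict_mono_on {0<..<1} gamma_fun \<and> convex_on {0<..<1} gamma_fun"
proof
  show "strict_mono_on {0<..<1} gamma_fun"
  proof (rule strict_mono_onI)
    fix x y :: real assume xy: "x \<in> {0<..<1}" "y \<in> {0<..<1}" "x < y"
    show "gamma_fun x < gamma_fun y"
    proof (rule DERIV_pos_imp_increasing_open[OF xy(3)])
      fix t assume "x < t" "t < y"
      then show "\<exists>d. DERIV gamma_fun t :> d \<and> d > 0"
        using xy deriv_g gd_pos by (metis greaterThanLessThan_iff less_trans)
    next
      show "continuous_on {x..y} gamma_fun"
        by (rule continuous_at_imp_continuous_on)
          (use xy in \<open>auto intro!: DERIV_isCont deriv_g\<close>)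
    qed
  qed
  show "convex_on {0<..<1} gamma_fun"
    by (rule convex_on_realI[where f'=gd]) (auto intro: deriv_g gd_mono)
qed

end
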